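(* For every $k\ge2$, $n\ge0$ and nonnegative integers $m_1,\dots,m_k$, $$\mathcal D_k(m_1,\dots,m_k;n)=\sum_{t_1,\dots,t_{k-1}\ge0}\mathcal D^{ss}_k(m_1+2t_1,\dots,m_{k-1}+2t_{k-1},m_k;n).$$
   Context: A partition is a finite nonincreasing sequence $\lambda=(\lambda_1,\dots,\lambda_r)$ of positive integers (possibly empty); $l(\lambda)=r$, $|\lambda|=\sum\lambda_i$, $\lambda_1$ the largest part. Let $k\ge1$. A $k$-marked Durfee symbol of $n$ is an array $\eta=\begin{pmatrix}\alpha^k,&\dots,&\alpha^1\\ \beta^k,&\dots,&\beta^1\end{pmatrix}_D$ consisting of an integer $D\ge0$ and $2k$ partitions $\alpha^i,\beta^i$ with $\sum_{i=1}^k(|\alpha^i|+|\beta^i|)+D^2=n$, such that: (1) $\alpha^i$ is nonempty for $1\le i<k$; (2) for $1\le i<k$ every part of $\beta^i$ is $\le\alpha^i_1$, and for $2\le i\le k$ every part of $\alpha^i$ and every part of $\beta^i$ is $\ge\alpha^{i-1}_1$; (3) all parts of $\alpha^k$ and $\beta^k$ are $\le D$. The pair $(\alpha^i,\beta^i)$ is the $i$th vector. The $i$th rank is $\rho_i(\eta)=l(\alpha^i)-l(\beta^i)-1$ for $1\le i<k$ and $\rho_k(\eta)=l(\alpha^k)-l(\beta^k)$. $\mathcal D_k(m_1,\dots,m_k;n)$ is the number of $k$-marked Durfee symbols of $n$ with $\rho_i=m_i$ for all $i$. A pair of partitions $(\alpha,\beta)$ is strict shifted if $l(\alpha)>l(\beta)$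 and $\alpha_{i+1}>\beta_i$ for $1\le i\le l(\beta)$. A $k$-marked Durfee symbol is strict shifted if each vector $(\alpha^i,\beta^i)$, $1\le i\le k-1$, is strict shifted; $\mathcal D^{ss}_k(m_1,\dots,m_k;n)$ is the number of $k$-marked strict shifted Durfee symbols of $n$ with $i$th rank $m_i$ for all $i$. *)

theory Defs
  imports "HOL-Analysis.Analysis"
begin

definition is_partition :: "nat list \<Rightarrow> bool" where
  "is_partition xs \<longleftrightarrow> sorted_wrt (\<ge>) xs \<and> (\<forall>p\<in>set xs. 0 < p)"

text \<open>A k-marked Durfee symbol is represented as (D, as, bs) where as and bs are lists
  of length k; as ! (i-1) is alpha^i and bs ! (i-1) is beta^i (1 \<le> i \<le> k).
  The largest part alpha^i_1 is hd (as ! (i-1)).\<close>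
type_synonym dsym = "nat \<times> nat list list \<times> nat list list"

definition is_kmds :: "nat \<Rightarrow> nat \<Rightarrow> dsym \<Rightarrow> bool" where
  "is_kmds k n \<eta> \<longleftrightarrow> (case \<eta> of (D, as, bs) \<Rightarrow>
     length as = k \<and> length bs = k \<and>
     (\<forall>i<k. is_partition (as ! i) \<and> is_partition (bs ! i)) \<and>
     (\<forall>i. i + 1 < k \<longrightarrow> as ! i \<noteq> []) \<and>
     (\<forall>i. i + 1 < k \<longrightarrow> (\<forall>p\<in>set (bs ! i). p \<le> hd (as ! i))) \<and>
     (\<forall>i. 1 \<le> i \<and> i < k \<longrightarrow>
        (\<forall>p\<in>set (as ! i) \<union> set (bs ! i). hd (as ! (i - 1)) \<le> p)) \<and>
     (\<forall>p\<in>set (as ! (k - 1)) \<union> set (bs ! (k - 1)). p \<le> D) \<and>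
     (\<Sum>i<k. sum_list (as ! i) + sum_list (bs ! i)) + D ^ 2 = n)"

text \<open>The (i+1)-th rank (0-based index i).\<close>
definition dsym_rank :: "nat \<Rightarrow> dsym \<Rightarrow> nat \<Rightarrow> int" where
  "dsym_rank k \<eta> i = (case \<eta> of (D, as, bs) \<Rightarrow>
     (if i + 1 < k then int (length (as ! i)) - int (length (bs ! i)) - 1
      else int (length (as ! i)) - int (length (bs ! i))))"

definition dsym_ranks :: "nat \<Rightarrow> dsym \<Rightarrow> int list" where
  "dsym_ranks k \<eta> = map (dsym_rank k \<eta>) [0..<k]"

definition strict_shifted :: "nat list \<Rightarrow> nat list \<Rightarrow> bool" where
  "strict_shifted \<alpha> \<beta> \<longleftrightarrow> length \<beta> < length \<alpha> \<and> (\<forall>i<length \<beta>. \<beta> ! i < \<alpha> ! Suc i)"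

definition is_ss_kmds :: "nat \<Rightarrow> nat \<Rightarrow> dsym \<Rightarrow> bool" where
  "is_ss_kmds k n \<eta> \<longleftrightarrow> is_kmds k n \<eta> \<and>
     (case \<eta> of (D, as, bs) \<Rightarrow> (\<forall>i. i + 1 < k \<longrightarrow> strict_shifted (as ! i) (bs ! i)))"

text \<open>ms ! (i-1) = m_i.\<close>
definition Dk :: "nat \<Rightarrow> int list \<Rightarrow> nat \<Rightarrow> nat" where
  "Dk k ms n = card {\<eta>. is_kmds k n \<eta> \<and> dsym_ranks k \<eta> = ms}"

definition Dss :: "nat \<Rightarrow> int list \<Rightarrow> nat \<Rightarrow> nat" where
  "Dss k ms n = card {\<eta>. is_ss_kmds k n \<eta> \<and> dsym_ranks k \<eta> = ms}"

end

theory Submission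
  imports Defs "HOL-Library.Multiset"
begin


definition G :: "nat multiset \<Rightarrow> nat \<Rightarrow> nat" where
  "G A v = size (filter_mset (\<lambda>x. v < x) A)"
definition GE :: "nat multiset \<Rightarrow> nat \<Rightarrow> nat" where
  "GE A v = size (filter_mset (\<lambda>x. v \<le> x) A)"
definition dd :: "nat multiset \<Rightarrow> nat multiset \<Rightarrow> nat \<Rightarrow> int" where
  "dd A B v = int (G A v) - int (GE B v)"
definition v0 :: "nat multiset \<Rightarrow> nat multiset \<Rightarrow> nat" where
  "v0 A B = Max {v. dd A B v < 0}"
definition FF :: "nat multiset \<times> nat multiset \<Rightarrow> nat multiset \<times> nat multiset" where
  "FF p = (case p of (A, B) \<Rightarrow> let v = v0 A B; s = G A v - G B v in
     (filter_mset (\<lambda>x. v < x) B + filter_mset (\<lambda>x. x < v) A + replicate_mset (count A v + s + 1) v,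
      filter_mset (\<lambda>x. v < x) A + filter_mset (\<lambda>x. x < v) B + replicate_mset (count B v - (s + 1)) v))"

lemma GE_G: "GE A v = G A v + count A v"
proof -
  have "filter_mset (\<lambda>x. v \<le> x) A = filter_mset (\<lambda>x. v < x) A + filter_mset (\<lambda>x. x = v) A"
    by (rule multiset_eqI) auto
  then show ?thesis unfolding GE_def G_def by (simp add: filter_eq_replicate_mset)
qed

lemma mset_split: "(M::nat multiset) = filter_mset (\<lambda>x. v < x) M + filter_mset (\<lambda>x. x < v) M + replicate_mset (count M v) v"
  by (rule multiset_eqI) (auto simp: count_replicate_mset)

lemma dd_fin: "finite {v. dd A B v < 0}"
proof (rule finite_subset)
  show "{v. dd A B v < 0} \<subseteq> (\<Union>x\<in>set_mset B. {..x})"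
  proof
    fix v assume "v \<in> {v. dd A B v < 0}"
    then have "GE B v > 0" unfolding dd_def by auto
    then have "filter_mset (\<lambda>x. v \<le> x) B \<noteq> {#}" unfolding GE_def by (metis less_numeral_extra(3) size_empty)
    then obtain x where "x \<in># filter_mset (\<lambda>x. v \<le> x) B" by (meson multiset_nonemptyE)
    then have "x \<in># B" "v \<le> x" by auto
    then show "v \<in> (\<Union>x\<in>set_mset B. {..x})" by auto
  qed
qed auto

lemma v0_props:
  assumes "\<exists>v. dd A B v < 0"
  shows "dd A B (v0 A B) < 0" "\<And>w. dd A B w < 0 \<Longrightarrow> w \<le> v0 A B"
  using assms dd_fin[of A B] unfolding v0_def
  by (auto intro: Max_ge) (metis (mono_tags, lifting) Max_in empty_Collect_eq mem_Collect_eq)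

lemma G_mono: "v \<le> w \<Longrightarrow> G A w \<le> G A v"
proof -
  assume "v \<le> w"
  then have "filter_mset (\<lambda>x. v < x) A = filter_mset (\<lambda>x. w < x) A + filter_mset (\<lambda>x. v < x \<and> x \<le> w) A"
    by (intro multiset_eqI) auto
  then show ?thesis unfolding G_def by (metis le_add1 size_union)
qed

lemma FF_props:
  assumes ns: "\<exists>v. dd A B v < 0" and eq: "FF (A, B) = (A', B')"
  shows "A' + B' = A + B"
    "int (size A') - int (size B') = int (size A) - int (size B) + 2"
    "\<exists>v. dd B' A' v < 0"
    "FF (B', A') = (B, A)"
    "set_mset A' \<subseteq> set_mset A \<union> set_mset B" "set_mset B' \<subseteq> set_mset A \<union> set_mset B"
proof -
  define v where "v = v0 A B"
  define s where "s = G A v - G B v"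
  have dv: "dd A B v < 0" and mx: "\<And>w. dd A B w < 0 \<Longrightarrow> w \<le> v"
    using v0_props[OF ns] v_def by auto
  have "dd A B (Suc v) \<ge> 0" using mx[of "Suc v"] by force
  moreover have "GE B (Suc v) = G B v" unfolding GE_def G_def
    by (metis Suc_le_eq)
  moreover have "G A (Suc v) \<le> G A v" by (rule G_mono) auto
  ultimately have sge: "G B v \<le> G A v" unfolding dd_def by auto
  have scnt: "s + 1 \<le> count B v" using dv sge unfolding dd_def s_def GE_G by auto
  have A'd: "A' = filter_mset (\<lambda>x. v < x) B + filter_mset (\<lambda>x. x < v) A + replicate_mset (count A v + s + 1) v"
   and B'd: "B' = filter_mset (\<lambda>x. v < x) A + filter_mset (\<lambda>x. x < v) B + replicate_mset (count B v - (s + 1)) v"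
    using eq unfolding FF_def v_def s_def Let_def by auto
  show "A' + B' = A + B"
    using scnt unfolding A'd B'd by (intro multiset_eqI) (auto simp: count_replicate_mset)
  have fA: "\<And>w. v \<le> w \<Longrightarrow> filter_mset (\<lambda>x. w < x) A' = filter_mset (\<lambda>x. w < x) B"
    unfolding A'd by (intro multiset_eqI) (auto simp: count_replicate_mset)
  have fB: "\<And>w. v \<le> w \<Longrightarrow> filter_mset (\<lambda>x. w < x) B' = filter_mset (\<lambda>x. w < x) A"
    unfolding B'd by (intro multiset_eqI) (auto simp: count_replicate_mset)
  have fA2: "\<And>w. v < w \<Longrightarrow> filter_mset (\<lambda>x. w \<le> x) A' = filter_mset (\<lambda>x. w \<le> x) B"
    unfolding A'd by (intro multiset_eqI) (auto simp: count_replicate_mset)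
  have fB2: "\<And>w. v < w \<Longrightarrow> filter_mset (\<lambda>x. w \<le> x) B' = filter_mset (\<lambda>x. w \<le> x) A"
    unfolding B'd by (intro multiset_eqI) (auto simp: count_replicate_mset)
  have lA: "filter_mset (\<lambda>x. x < v) A' = filter_mset (\<lambda>x. x < v) A"
    unfolding A'd by (intro multiset_eqI) (auto simp: count_replicate_mset)
  have lB: "filter_mset (\<lambda>x. x < v) B' = filter_mset (\<lambda>x. x < v) B"
    unfolding B'd by (intro multiset_eqI) (auto simp: count_replicate_mset)
  have cA: "count A' v = count A v + s + 1" unfolding A'd by (simp add: count_replicate_mset)
  have cB: "count B' v = count B v - (s + 1)" unfolding B'd by (simp add: count_replicate_mset)
  have GA': "G A' v = G B v" and GB': "G B' v = G A v" using fA fB unfolding G_def by auto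
  have sz: "\<And>M. size M = G M v + size (filter_mset (\<lambda>x. x < v) M) + count M v"
    by (subst mset_split[of _ v]) (simp add: G_def)
  show "int (size A') - int (size B') = int (size A) - int (size B) + 2"
    using sz[of A'] sz[of B'] sz[of A] sz[of B] GA' GB' cA cB lA lB scnt sge s_def by simp
  show "\<exists>v. dd B' A' v < 0"
    by (rule exI[of _ v]) (use GA' GB' cA sge s_def in \<open>simp add: dd_def GE_G\<close>)
  have ns': "\<exists>v. dd B' A' v < 0"
    by (rule exI[of _ v]) (use GA' GB' cA sge s_def in \<open>simp add: dd_def GE_G\<close>)
  have v': "v0 B' A' = v"
  proof -
    have "dd B' A' v < 0" using GA' GB' cA sge s_def by (simp add: dd_def GE_G)
    then have "v \<le> v0 B' A'" using v0_props(2)[OF ns'] by auto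
    moreover have "\<not> v < v0 B' A'"
    proof
      assume lt: "v < v0 B' A'"
      have "dd B' A' (v0 B' A') = dd A B (v0 B' A')"
        using fA2[OF lt] fB[of "v0 B' A'"] lt unfolding dd_def G_def GE_def by auto
      then have "dd A B (v0 B' A') < 0" using v0_props(1)[OF ns'] by simp
      then show False using mx lt by fastforce
    qed
    ultimately show ?thesis by simp
  qed
  have s': "G B' v - G A' v = s" using GA' GB' s_def by simp
  have "FF (B', A') = (filter_mset (\<lambda>x. v < x) A' + filter_mset (\<lambda>x. x < v) B' + replicate_mset (count B' v + s + 1) v,
      filter_mset (\<lambda>x. v < x) B' + filter_mset (\<lambda>x. x < v) A' + replicate_mset (count A' v - (s + 1)) v)"
    by (simp add: FF_def Let_def v' s')
  also have "\<dots> = (B, A)"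
  proof -
    have e1: "count B' v + s + 1 = count B v" "count A' v - (s + 1) = count A v" using cA cB scnt by auto
    show ?thesis unfolding e1 fA[OF order_refl] fB[OF order_refl] lA lB
      using mset_split[of A v] mset_split[of B v] by simp
  qed
  finally show "FF (B', A') = (B, A)" .
  show "set_mset A' \<subseteq> set_mset A \<union> set_mset B" "set_mset B' \<subseteq> set_mset A \<union> set_mset B"
  proof -
    have "v \<in># B" using scnt by (metis Suc_eq_plus1 Suc_le_eq count_greater_zero_iff less_le_trans zero_less_Suc)
    then show "set_mset A' \<subseteq> set_mset A \<union> set_mset B" "set_mset B' \<subseteq> set_mset A \<union> set_mset B"
      unfolding A'd B'd by (auto simp: count_replicate_mset)
  qed
qed

definition sdesc :: "nat multiset \<Rightarrow> nat list" where
  "sdesc M = rev (sorted_list_of_multiset M)"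

lemma sdesc_sorted: "sorted_wrt (\<ge>) (sdesc M)"
  unfolding sdesc_def sorted_wrt_rev by (metis sorted_sorted_list_of_multiset sorted_wrt_mono_rel)

lemma mset_sdesc[simp]: "mset (sdesc M) = M"
  unfolding sdesc_def by simp

lemma set_sdesc[simp]: "set (sdesc M) = set_mset M"
  by (metis mset_sdesc set_mset_mset)

lemma length_sdesc[simp]: "length (sdesc M) = size M"
  by (metis mset_sdesc size_mset)

lemma sdesc_mset: "sorted_wrt (\<ge>) xs \<Longrightarrow> sdesc (mset xs) = xs"
proof -
  assume a: "sorted_wrt (\<ge>) xs"
  have "sorted (rev xs)" unfolding sorted_wrt_rev using a by (metis sorted_wrt_mono_rel)
  then have "sort xs = rev xs" by (intro properties_for_sort) auto
  then show ?thesis unfolding sdesc_def by simp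
qed

lemma ss_core:
  "sorted_wrt (\<ge>) xs \<Longrightarrow> sorted_wrt (\<ge>) (ys::nat list) \<Longrightarrow>
   (length ys \<le> length xs \<and> (\<forall>i<length ys. ys!i < xs!i)) \<longleftrightarrow>
   (\<forall>v. length (filter (\<lambda>y. v \<le> y) ys) \<le> length (filter (\<lambda>x. v < x) xs))"
proof (induction ys arbitrary: xs)
  case Nil
  then show ?case by simp
next
  case (Cons y ys)
  show ?case
  proof (cases xs)
    case Nil
    then show ?thesis by (auto intro: exI[of _ y])
  next
    case (Cons x xs')
    have sx: "\<forall>z\<in>set xs'. z \<le> x" "sorted_wrt (\<ge>) xs'" using Cons.prems(1) Cons by auto
    have sy: "\<forall>z\<in>set ys. z \<le> y" "sorted_wrt (\<ge>) ys" using Cons.prems(2) by auto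
    note IH = Cons.IH[OF sx(2) sy(2)]
    have L: "(length (y#ys) \<le> length xs \<and> (\<forall>i<length (y#ys). (y#ys)!i < xs!i)) \<longleftrightarrow>
       y < x \<and> (length ys \<le> length xs' \<and> (\<forall>i<length ys. ys!i < xs'!i))"
      unfolding Cons by (auto simp: All_less_Suc2)
    have f0: "\<And>v. v > y \<Longrightarrow> filter (\<lambda>z. v \<le> z) ys = []"
      using sy(1) by (auto simp: filter_empty_conv)
    have R: "(\<forall>v. length (filter (\<lambda>z. v \<le> z) (y#ys)) \<le> length (filter (\<lambda>z. v < z) xs)) \<longleftrightarrow>
       y < x \<and> (\<forall>v. length (filter (\<lambda>z. v \<le> z) ys) \<le> length (filter (\<lambda>z. v < z) xs'))"
    proof
      assume H: "\<forall>v. length (filter (\<lambda>z. v \<le> z) (y#ys)) \<le> length (filter (\<lambda>z. v < z) xs)"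
      have yx: "y < x"
      proof (rule ccontr)
        assume "\<not> y < x"
        then have "filter (\<lambda>z. y < z) xs' = []" using sx(1) by (auto simp: filter_empty_conv)
        then show False using H[rule_format, of y] \<open>\<not> y < x\<close> Cons by simp
      qed
      show "y < x \<and> (\<forall>v. length (filter (\<lambda>z. v \<le> z) ys) \<le> length (filter (\<lambda>z. v < z) xs'))"
      proof (intro conjI allI yx)
        fix v
        show "length (filter (\<lambda>z. v \<le> z) ys) \<le> length (filter (\<lambda>z. v < z) xs')"
        proof (cases "v \<le> y")
          case True
          then show ?thesis using H[rule_format, of v] yx Cons by simp
        next
          case False
          then show ?thesis using f0[of v] by simp
        qed
      qed
    next
      assume H: "y < x \<and> (\<forall>v. length (filter (\<lambda>z. v \<le> z) ys) \<le> length (filter (\<lambda>z. v < z) xs'))"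
      show "\<forall>v. length (filter (\<lambda>z. v \<le> z) (y#ys)) \<le> length (filter (\<lambda>z. v < z) xs)"
      proof
        fix v
        show "length (filter (\<lambda>z. v \<le> z) (y#ys)) \<le> length (filter (\<lambda>z. v < z) xs)"
        proof (cases "v \<le> y")
          case True
          then show ?thesis using H Cons by auto
        next
          case False
          then show ?thesis using f0[of v] by simp
        qed
      qed
    qed
    show ?thesis using L R IH by blast
  qed
qed

lemma size_filter_mset_mset: "size (filter_mset P (mset xs)) = length (filter P xs)"
  by (metis mset_filter size_mset)

lemma ss_iff:
  assumes "sorted_wrt (\<ge>) xs" "sorted_wrt (\<ge>) (ys::nat list)"
  shows "strict_shifted (a#xs) ys \<longleftrightarrow> (\<forall>v. dd (mset xs) (mset ys) v \<ge> 0)"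
proof -
  have "strict_shifted (a#xs) ys \<longleftrightarrow> (length ys \<le> length xs \<and> (\<forall>i<length ys. ys!i < xs!i))"
    unfolding strict_shifted_def by auto
  also have "\<dots> \<longleftrightarrow> (\<forall>v. length (filter (\<lambda>y. v \<le> y) ys) \<le> length (filter (\<lambda>x. v < x) xs))"
    by (rule ss_core[OF assms])
  also have "\<dots> \<longleftrightarrow> (\<forall>v. dd (mset xs) (mset ys) v \<ge> 0)"
    unfolding dd_def G_def GE_def size_filter_mset_mset by auto
  finally show ?thesis .
qed


lemma part_cons: "is_partition (a # xs) \<longleftrightarrow> (\<forall>p\<in>set xs. p \<le> a) \<and> 0 < a \<and> is_partition xs"
  unfolding is_partition_def by auto

lemma part_hd: "is_partition xs \<Longrightarrow> p \<in> set xs \<Longrightarrow> p \<le> hd xs"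
  by (cases xs) (auto simp: is_partition_def)

lemma part_sdesc: "is_partition (sdesc M) \<longleftrightarrow> (\<forall>p\<in>#M. 0 < p)"
  unfolding is_partition_def using sdesc_sorted by auto

lemma kmds_replace:
  assumes K: "is_kmds k n (D, as, bs)" and J: "J + 1 < k"
    and pa: "is_partition \<alpha>2" and pb: "is_partition \<beta>2" and ne: "\<alpha>2 \<noteq> []"
    and hd: "hd \<alpha>2 = hd (as ! J)"
    and ms: "mset \<alpha>2 + mset \<beta>2 = mset (as ! J) + mset (bs ! J)"
  shows "is_kmds k n (D, as[J := \<alpha>2], bs[J := \<beta>2])"
proof -
  from K have len: "length as = k" "length bs = k"
    and parts: "\<forall>i<k. is_partition (as ! i) \<and> is_partition (bs ! i)"
    and nemp: "\<forall>i. i + 1 < k \<longrightarrow> as ! i \<noteq> []"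
    and bhd: "\<forall>i. i + 1 < k \<longrightarrow> (\<forall>p\<in>set (bs ! i). p \<le> hd (as ! i))"
    and low: "\<forall>i. 1 \<le> i \<and> i < k \<longrightarrow> (\<forall>p\<in>set (as ! i) \<union> set (bs ! i). hd (as ! (i - 1)) \<le> p)"
    and up: "\<forall>p\<in>set (as ! (k - 1)) \<union> set (bs ! (k - 1)). p \<le> D"
    and sm: "(\<Sum>i<k. sum_list (as ! i) + sum_list (bs ! i)) + D ^ 2 = n"
    unfolding is_kmds_def by auto
  have st: "set \<alpha>2 \<union> set \<beta>2 = set (as ! J) \<union> set (bs ! J)"
    using arg_cong[OF ms, of set_mset] by simp
  have Jk: "J < k" using J by simp
  have pJ: "is_partition (as ! J)" using parts Jk by auto
  have "\<forall>p\<in>set (as ! J) \<union> set (bs ! J). p \<le> hd (as ! J)"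
    using part_hd[OF pJ] bhd J by auto
  then have bhd2: "\<forall>p\<in>set \<beta>2. p \<le> hd \<alpha>2" using st hd by auto
  have ssum: "sum_list \<alpha>2 + sum_list \<beta>2 = sum_list (as ! J) + sum_list (bs ! J)"
    using arg_cong[OF ms, of sum_mset] by (simp add: sum_mset_sum_list)
  have sm2: "(\<Sum>i<k. sum_list (as[J := \<alpha>2] ! i) + sum_list (bs[J := \<beta>2] ! i)) =
             (\<Sum>i<k. sum_list (as ! i) + sum_list (bs ! i))"
  proof (rule sum.cong)
    fix x assume "x \<in> {..<k}"
    then show "sum_list (as[J := \<alpha>2] ! x) + sum_list (bs[J := \<beta>2] ! x) = sum_list (as ! x) + sum_list (bs ! x)"
      using ssum len by (cases "x = J") auto
  qed simp
  show ?thesis unfolding is_kmds_def prod.case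
  proof (intro conjI allI impI ballI)
    show "length (as[J := \<alpha>2]) = k" "length (bs[J := \<beta>2]) = k" using len by auto
  next
    fix i assume "i < k" then show "is_partition (as[J := \<alpha>2] ! i)" "is_partition (bs[J := \<beta>2] ! i)"
      using parts pa pb len by (cases "i = J"; auto)+
  next
    fix i assume "i + 1 < k" then show "as[J := \<alpha>2] ! i \<noteq> []"
      using nemp ne len by (cases "i = J") auto
  next
    fix i p assume "i + 1 < k" "p \<in> set (bs[J := \<beta>2] ! i)"
    then show "p \<le> hd (as[J := \<alpha>2] ! i)" using bhd bhd2 len by (cases "i = J") auto
  next
    fix i p assume i: "1 \<le> i \<and> i < k" and p: "p \<in> set (as[J := \<alpha>2] ! i) \<union> set (bs[J := \<beta>2] ! i)"
    have h: "hd (as[J := \<alpha>2] ! (i - 1)) = hd (as ! (i - 1))"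
      using hd len i by (cases "i - 1 = J") auto
    have "p \<in> set (as ! i) \<union> set (bs ! i)"
      using p st len i by (cases "i = J") auto
    then show "hd (as[J := \<alpha>2] ! (i - 1)) \<le> p" unfolding h using low i by auto
  next
    fix p assume "p \<in> set (as[J := \<alpha>2] ! (k - 1)) \<union> set (bs[J := \<beta>2] ! (k - 1))"
    then show "p \<le> D" using up J by auto
  next
    show "(\<Sum>i<k. sum_list (as[J := \<alpha>2] ! i) + sum_list (bs[J := \<beta>2] ! i)) + D ^ 2 = n"
      using sm sm2 by simp
  qed
qed

lemma ranks_replace:
  assumes "J < k" "length as = k" "length bs = k"
  shows "dsym_ranks k (D, as[J := \<alpha>2], bs[J := \<beta>2]) =
    (dsym_ranks k (D, as, bs))[J := (if J + 1 < k then int (length \<alpha>2) - int (length \<beta>2) - 1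
                                     else int (length \<alpha>2) - int (length \<beta>2))]"
  using assms unfolding dsym_ranks_def
  by (intro nth_equalityI) (auto simp: dsym_rank_def nth_list_update)


lemma kmds_vec:
  assumes K: "is_kmds k n (D, as, bs)" and J: "J + 1 < k"
  shows "as ! J \<noteq> []" "as ! J = hd (as ! J) # tl (as ! J)"
    "sorted_wrt (\<ge>) (tl (as ! J))" "sorted_wrt (\<ge>) (bs ! J)"
    "\<forall>p\<in>set (tl (as ! J)) \<union> set (bs ! J). p \<le> hd (as ! J) \<and> 0 < p" "0 < hd (as ! J)"
    "length as = k" "length bs = k"
proof -
  from K J have ne: "as ! J \<noteq> []" and pa: "is_partition (as ! J)" and pb: "is_partition (bs ! J)"
    and bh: "\<forall>p\<in>set (bs ! J). p \<le> hd (as ! J)"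
    unfolding is_kmds_def by auto
  show "as ! J \<noteq> []" by fact
  show eq: "as ! J = hd (as ! J) # tl (as ! J)" using ne by simp
  have pc: "is_partition (hd (as ! J) # tl (as ! J))" using pa eq by simp
  then show "sorted_wrt (\<ge>) (tl (as ! J))" "0 < hd (as ! J)" unfolding part_cons is_partition_def by auto
  show "sorted_wrt (\<ge>) (bs ! J)" using pb unfolding is_partition_def by auto
  show "\<forall>p\<in>set (tl (as ! J)) \<union> set (bs ! J). p \<le> hd (as ! J) \<and> 0 < p"
    using pc pb bh unfolding part_cons by (auto simp: is_partition_def)
  show "length as = k" "length bs = k" using K unfolding is_kmds_def by auto
qed

lemma vec_replace:
  assumes K: "is_kmds k n (D, as, bs)" and J: "J + 1 < k"
    and XY: "X + Y = mset (tl (as ! J)) + mset (bs ! J)"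
  shows "is_kmds k n (D, as[J := hd (as ! J) # sdesc X], bs[J := sdesc Y])"
    "dsym_ranks k (D, as[J := hd (as ! J) # sdesc X], bs[J := sdesc Y]) =
     (dsym_ranks k (D, as, bs))[J := int (size X) - int (size Y)]"
proof -
  note V = kmds_vec[OF K J]
  have el: "\<forall>p\<in>#X + Y. p \<le> hd (as ! J) \<and> 0 < p" using XY V(5) by auto
  show "is_kmds k n (D, as[J := hd (as ! J) # sdesc X], bs[J := sdesc Y])"
  proof (rule kmds_replace[OF K J])
    show "is_partition (hd (as ! J) # sdesc X)" unfolding part_cons part_sdesc using el V(6) by auto
    show "is_partition (sdesc Y)" unfolding part_sdesc using el by auto
    show "mset (hd (as ! J) # sdesc X) + mset (sdesc Y) = mset (as ! J) + mset (bs ! J)"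
      using XY V(2) by (metis add_mset_add_single mset.simps(2) mset_sdesc union_assoc union_commute)
  qed auto
  show "dsym_ranks k (D, as[J := hd (as ! J) # sdesc X], bs[J := sdesc Y]) =
     (dsym_ranks k (D, as, bs))[J := int (size X) - int (size Y)]"
    using ranks_replace[of J k as bs D] J V(7,8) by simp
qed

lemma rank_J:
  assumes K: "is_kmds k n (D, as, bs)" and J: "J + 1 < k"
  shows "dsym_ranks k (D, as, bs) ! J = int (length (tl (as ! J))) - int (length (bs ! J))"
proof -
  have "as ! J \<noteq> []" using kmds_vec(1)[OF K J] .
  then show ?thesis using J unfolding dsym_ranks_def dsym_rank_def by (cases "as ! J") auto
qed

definition Phi :: "nat \<Rightarrow> dsym \<Rightarrow> dsym" where
  "Phi J \<eta> = (case \<eta> of (D, as, bs) \<Rightarrow>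
     (D, as[J := hd (as ! J) # sdesc (fst (FF (mset (tl (as ! J)), mset (bs ! J))))],
         bs[J := sdesc (snd (FF (mset (tl (as ! J)), mset (bs ! J))))]))"

definition Psi :: "nat \<Rightarrow> dsym \<Rightarrow> dsym" where
  "Psi J \<eta> = (case \<eta> of (D, as, bs) \<Rightarrow>
     (D, as[J := hd (as ! J) # sdesc (snd (FF (mset (bs ! J), mset (tl (as ! J)))))],
         bs[J := sdesc (fst (FF (mset (bs ! J), mset (tl (as ! J)))))]))"

lemma ss_J:
  assumes K: "is_kmds k n (D, as, bs)" and J: "J + 1 < k"
  shows "strict_shifted (as ! J) (bs ! J) \<longleftrightarrow> (\<forall>v. dd (mset (tl (as ! J))) (mset (bs ! J)) v \<ge> 0)"
  using ss_iff[OF kmds_vec(3,4)[OF K J]] kmds_vec(2)[OF K J] by metis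

lemma Phi_props:
  assumes K: "is_kmds k n (D, as, bs)" and J: "J + 1 < k" and ns: "\<not> strict_shifted (as ! J) (bs ! J)"
  shows "is_kmds k n (Phi J (D, as, bs))"
    "dsym_ranks k (Phi J (D, as, bs)) = (dsym_ranks k (D, as, bs))[J := dsym_ranks k (D, as, bs) ! J + 2]"
    "Psi J (Phi J (D, as, bs)) = (D, as, bs)"
    "\<And>i. i \<noteq> J \<Longrightarrow> fst (snd (Phi J (D, as, bs))) ! i = as ! i \<and> snd (snd (Phi J (D, as, bs))) ! i = bs ! i"
proof -
  note V = kmds_vec[OF K J]
  define A where "A = mset (tl (as ! J))"
  define B where "B = mset (bs ! J)"
  obtain A' B' where FFe: "FF (A, B) = (A', B')" by fastforce
  have nsv: "\<exists>v. dd A B v < 0" using ns ss_J[OF K J] unfolding A_def B_def by (meson not_le)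
  note P = FF_props[OF nsv FFe]
  have Ph: "Phi J (D, as, bs) = (D, as[J := hd (as ! J) # sdesc A'], bs[J := sdesc B'])"
  proof -
    have FFe': "FF (mset (tl (as ! J)), mset (bs ! J)) = (A', B')" using FFe A_def B_def by simp
    show ?thesis by (simp add: Phi_def FFe')
  qed
  have XY: "A' + B' = mset (tl (as ! J)) + mset (bs ! J)" using P(1) A_def B_def by simp
  show "is_kmds k n (Phi J (D, as, bs))" unfolding Ph by (rule vec_replace(1)[OF K J XY])
  show "dsym_ranks k (Phi J (D, as, bs)) = (dsym_ranks k (D, as, bs))[J := dsym_ranks k (D, as, bs) ! J + 2]"
    unfolding Ph vec_replace(2)[OF K J XY] rank_J[OF K J] using P(2) unfolding A_def B_def by simp
  show "\<And>i. i \<noteq> J \<Longrightarrow> fst (snd (Phi J (D, as, bs))) ! i = as ! i \<and> snd (snd (Phi J (D, as, bs))) ! i = bs ! i"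
    unfolding Ph by simp
  have "Psi J (Phi J (D, as, bs)) = (D, as[J := hd (as ! J) # sdesc A], bs[J := sdesc B])"
    unfolding Ph Psi_def using J V(7,8) P(4) by simp
  also have "\<dots> = (D, as, bs)" unfolding A_def B_def sdesc_mset[OF V(3)] sdesc_mset[OF V(4)]
    using V(2) by (metis list_update_id)
  finally show "Psi J (Phi J (D, as, bs)) = (D, as, bs)" .
qed

lemma Psi_props:
  assumes K: "is_kmds k n (D, as, bs)" and J: "J + 1 < k" and r: "dsym_ranks k (D, as, bs) ! J \<ge> 2"
  shows "is_kmds k n (Psi J (D, as, bs))"
    "dsym_ranks k (Psi J (D, as, bs)) = (dsym_ranks k (D, as, bs))[J := dsym_ranks k (D, as, bs) ! J - 2]"
    "Phi J (Psi J (D, as, bs)) = (D, as, bs)"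
    "\<And>i. i \<noteq> J \<Longrightarrow> fst (snd (Psi J (D, as, bs))) ! i = as ! i \<and> snd (snd (Psi J (D, as, bs))) ! i = bs ! i"
    "\<not> strict_shifted (fst (snd (Psi J (D, as, bs))) ! J) (snd (snd (Psi J (D, as, bs))) ! J)"
proof -
  note V = kmds_vec[OF K J]
  define A where "A = mset (tl (as ! J))"
  define B where "B = mset (bs ! J)"
  obtain X Y where FFe: "FF (B, A) = (X, Y)" by fastforce
  have sz: "int (size A) - int (size B) \<ge> 2" using r rank_J[OF K J] unfolding A_def B_def by simp
  have nsv: "\<exists>v. dd B A v < 0"
  proof
    have "G B 0 \<le> size B" unfolding G_def by simp
    moreover have "filter_mset ((\<le>) 0) A = A" by (rule multiset_eqI) simp
    then have "GE A 0 = size A" unfolding GE_def by simp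
    ultimately show "dd B A 0 < 0" using sz unfolding dd_def by simp
  qed
  note P = FF_props[OF nsv FFe]
  have Ps: "Psi J (D, as, bs) = (D, as[J := hd (as ! J) # sdesc Y], bs[J := sdesc X])"
  proof -
    have FFe': "FF (mset (bs ! J), mset (tl (as ! J))) = (X, Y)" using FFe A_def B_def by simp
    show ?thesis by (simp add: Psi_def FFe')
  qed
  have XY: "Y + X = mset (tl (as ! J)) + mset (bs ! J)" using P(1) A_def B_def by (simp add: add.commute)
  show "is_kmds k n (Psi J (D, as, bs))" unfolding Ps by (rule vec_replace(1)[OF K J XY])
  show "dsym_ranks k (Psi J (D, as, bs)) = (dsym_ranks k (D, as, bs))[J := dsym_ranks k (D, as, bs) ! J - 2]"
  proof -
    have "int (size Y) - int (size X) = int (length (tl (as ! J))) - int (length (bs ! J)) - 2"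
      using P(2) unfolding A_def B_def by simp
    then show ?thesis unfolding Ps vec_replace(2)[OF K J XY] rank_J[OF K J] by simp
  qed
  show "\<And>i. i \<noteq> J \<Longrightarrow> fst (snd (Psi J (D, as, bs))) ! i = as ! i \<and> snd (snd (Psi J (D, as, bs))) ! i = bs ! i"
    unfolding Ps by simp
  show "\<not> strict_shifted (fst (snd (Psi J (D, as, bs))) ! J) (snd (snd (Psi J (D, as, bs))) ! J)"
    unfolding Ps using J V(7,8) ss_iff[OF sdesc_sorted sdesc_sorted, of "hd (as ! J)" Y X] P(3)
    by (simp add: not_le)
  have "Phi J (Psi J (D, as, bs)) = (D, as[J := hd (as ! J) # sdesc A], bs[J := sdesc B])"
    unfolding Ps Phi_def using J V(7,8) P(4) by simp
  also have "\<dots> = (D, as, bs)" unfolding A_def B_def sdesc_mset[OF V(3)] sdesc_mset[OF V(4)]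
    using V(2) by (metis list_update_id)
  finally show "Phi J (Psi J (D, as, bs)) = (D, as, bs)" .
qed




lemma len_le_sum: "(\<forall>p\<in>set xs. 0 < p) \<Longrightarrow> length xs \<le> sum_list (xs::nat list)"
  by (induction xs) auto

lemma kmds_sum_bound:
  assumes K: "is_kmds k n (D, as, bs)" and i: "i < k"
  shows "sum_list (as ! i) \<le> n" "sum_list (bs ! i) \<le> n" "D \<le> n"
    "length (as ! i) \<le> n" "set (as ! i) \<subseteq> {..n}" "length (bs ! i) \<le> n" "set (bs ! i) \<subseteq> {..n}"
proof -
  from K have sm: "(\<Sum>i<k. sum_list (as ! i) + sum_list (bs ! i)) + D ^ 2 = n"
    and pa: "is_partition (as ! i)" and pb: "is_partition (bs ! i)"
    unfolding is_kmds_def using i by auto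
  have "sum_list (as ! i) + sum_list (bs ! i) \<le> (\<Sum>i<k. sum_list (as ! i) + sum_list (bs ! i))"
    by (rule member_le_sum[of i "{..<k}" "\<lambda>i. sum_list (as ! i) + sum_list (bs ! i)"]) (use i in auto)
  then show sa: "sum_list (as ! i) \<le> n" and sb: "sum_list (bs ! i) \<le> n" using sm by auto
  have "D \<le> D ^ 2" by (simp add: power2_eq_square le_square)
  then show "D \<le> n" using sm by auto
  show "length (as ! i) \<le> n" using len_le_sum[of "as ! i"] pa sa unfolding is_partition_def by auto
  show "length (bs ! i) \<le> n" using len_le_sum[of "bs ! i"] pb sb unfolding is_partition_def by auto
  show "set (as ! i) \<subseteq> {..n}" using sa member_le_sum_list[of _ "as ! i"] by fastforce
  show "set (bs ! i) \<subseteq> {..n}" using sb member_le_sum_list[of _ "bs ! i"] by fastforce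
qed

lemma finite_kmds: "finite {\<eta>. is_kmds k n \<eta>}"
proof -
  define P where "P = {xs::nat list. set xs \<subseteq> {..n} \<and> length xs \<le> n}"
  define Q where "Q = {as. set as \<subseteq> P \<and> length as = k}"
  have fP: "finite P" unfolding P_def by (rule finite_lists_length_le) simp
  have fQ: "finite Q" unfolding Q_def by (rule finite_lists_length_eq[OF fP])
  have "{\<eta>. is_kmds k n \<eta>} \<subseteq> {..n} \<times> Q \<times> Q"
  proof
    fix \<eta> assume H: "\<eta> \<in> {\<eta>. is_kmds k n \<eta>}"
    obtain D as bs where e: "\<eta> = (D, as, bs)" by (cases \<eta>)
    have K: "is_kmds k n (D, as, bs)" using H e by simp
    have len: "length as = k" "length bs = k" using K unfolding is_kmds_def by auto
    have "set as \<subseteq> P"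
    proof
      fix x assume "x \<in> set as"
      then obtain i where i: "i < k" "x = as ! i" using len by (auto simp: in_set_conv_nth)
      show "x \<in> P" unfolding P_def using kmds_sum_bound(4,5)[OF K i(1)] i(2) by simp
    qed
    moreover have "set bs \<subseteq> P"
    proof
      fix x assume "x \<in> set bs"
      then obtain i where i: "i < k" "x = bs ! i" using len by (auto simp: in_set_conv_nth)
      show "x \<in> P" unfolding P_def using kmds_sum_bound(6,7)[OF K i(1)] i(2) by simp
    qed
    moreover have "D \<le> n"
    proof -
      have "(\<Sum>i<k. sum_list (as ! i) + sum_list (bs ! i)) + D ^ 2 = n" using K unfolding is_kmds_def by simp
      then have "D ^ 2 \<le> n" by linarith
      moreover have "D \<le> D ^ 2" by (simp add: power2_eq_square le_square)
      ultimately show ?thesis by simp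
    qed
    ultimately show "\<eta> \<in> {..n} \<times> Q \<times> Q" unfolding e Q_def using len by simp
  qed
  then show ?thesis by (rule finite_subset) (use fQ in simp)
qed

lemma rank_bound:
  assumes K: "is_kmds k n (D, as, bs)" and i: "i < k"
  shows "dsym_ranks k (D, as, bs) ! i \<le> int n"
  using kmds_sum_bound(4)[OF K i] i unfolding dsym_ranks_def dsym_rank_def by auto

definition SS :: "nat \<Rightarrow> nat \<Rightarrow> nat list \<Rightarrow> nat \<Rightarrow> dsym set" where
  "SS k n ms J = {\<eta>. is_kmds k n \<eta> \<and> dsym_ranks k \<eta> = map int ms \<and>
     (case \<eta> of (D, as, bs) \<Rightarrow> \<forall>i<J. strict_shifted (as ! i) (bs ! i))}"

lemma SS_empty:
  assumes "length ms = k" "i < k" "ms ! i > n"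
  shows "SS k n ms J = {}"
proof (rule ccontr)
  assume "SS k n ms J \<noteq> {}"
  then obtain D as bs where K: "is_kmds k n (D, as, bs)" and r: "dsym_ranks k (D, as, bs) = map int ms"
    unfolding SS_def by auto
  have "dsym_ranks k (D, as, bs) ! i \<le> int n" by (rule rank_bound[OF K assms(2)])
  then show False using r assms by simp
qed

lemma finite_SS: "finite (SS k n ms J)"
  by (rule finite_subset[OF _ finite_kmds]) (auto simp: SS_def)

lemma key:
  assumes J: "J + 1 < k" and L: "length ms = k"
  shows "card (SS k n ms J) = card (SS k n ms (Suc J)) + card (SS k n (ms[J := ms ! J + 2]) J)"
proof -
  define X where "X = {\<eta> \<in> SS k n ms J. \<not> (case \<eta> of (D, as, bs) \<Rightarrow> strict_shifted (as ! J) (bs ! J))}"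
  have U: "SS k n ms J = SS k n ms (Suc J) \<union> X" and Dj: "SS k n ms (Suc J) \<inter> X = {}"
    unfolding X_def SS_def by (auto simp: less_Suc_eq split: prod.splits)
  have c1: "card (SS k n ms J) = card (SS k n ms (Suc J)) + card X"
  proof -
    have f: "finite (SS k n ms (Suc J) \<union> X)" using finite_SS[of k n ms J] U by simp
    show ?thesis unfolding U by (rule card_Un_disjoint) (use f Dj in auto)
  qed
  define T where "T = SS k n (ms[J := ms ! J + 2]) J"
  have Jk: "J < k" using J by simp
  have bij: "bij_betw (Phi J) X T"
  proof (rule bij_betw_byWitness[where f'="Psi J"])
    show "\<forall>a\<in>X. Psi J (Phi J a) = a"
    proof
      fix \<eta> assume "\<eta> \<in> X"
      then obtain D as bs where e: "\<eta> = (D, as, bs)" and K: "is_kmds k n (D, as, bs)"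
        and ns: "\<not> strict_shifted (as ! J) (bs ! J)"
        unfolding X_def SS_def by (cases \<eta>) auto
      show "Psi J (Phi J \<eta>) = \<eta>" unfolding e by (rule Phi_props(3)[OF K J ns])
    qed
    show "Phi J ` X \<subseteq> T"
    proof
      fix \<eta>' assume "\<eta>' \<in> Phi J ` X"
      then obtain \<eta> where "\<eta> \<in> X" and e': "\<eta>' = Phi J \<eta>" by auto
      then obtain D as bs where e: "\<eta> = (D, as, bs)" and K: "is_kmds k n (D, as, bs)"
        and ns: "\<not> strict_shifted (as ! J) (bs ! J)" and r: "dsym_ranks k (D, as, bs) = map int ms"
        and ss: "\<forall>i<J. strict_shifted (as ! i) (bs ! i)"
        unfolding X_def SS_def by (cases \<eta>) auto
      obtain D' as' bs' where e2: "Phi J (D, as, bs) = (D', as', bs')" by (cases "Phi J (D, as, bs)")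
      have K': "is_kmds k n (D', as', bs')" using Phi_props(1)[OF K J ns] e2 by simp
      have r': "dsym_ranks k (D', as', bs') = map int (ms[J := ms ! J + 2])"
        using Phi_props(2)[OF K J ns] e2 r L Jk by (simp add: map_update add.commute)
      have ss': "\<forall>i<J. strict_shifted (as' ! i) (bs' ! i)"
      proof (intro allI impI)
        fix i assume i: "i < J"
        then have "as' ! i = as ! i \<and> bs' ! i = bs ! i" using Phi_props(4)[OF K J ns, of i] e2 by simp
        then show "strict_shifted (as' ! i) (bs' ! i)" using ss i by simp
      qed
      show "\<eta>' \<in> T" unfolding T_def SS_def e' e e2 using K' r' ss' by simp
    qed
    show "\<forall>a\<in>T. Phi J (Psi J a) = a"
    proof
      fix \<eta> assume "\<eta> \<in> T"
      then obtain D as bs where e: "\<eta> = (D, as, bs)" and K: "is_kmds k n (D, as, bs)"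
        and r: "dsym_ranks k (D, as, bs) = map int (ms[J := ms ! J + 2])"
        unfolding T_def SS_def by (cases \<eta>) auto
      have r2: "dsym_ranks k (D, as, bs) ! J \<ge> 2" using r L Jk by simp
      show "Phi J (Psi J \<eta>) = \<eta>" unfolding e by (rule Psi_props(3)[OF K J r2])
    qed
    show "Psi J ` T \<subseteq> X"
    proof
      fix \<eta>' assume "\<eta>' \<in> Psi J ` T"
      then obtain \<eta> where "\<eta> \<in> T" and e': "\<eta>' = Psi J \<eta>" by auto
      then obtain D as bs where e: "\<eta> = (D, as, bs)" and K: "is_kmds k n (D, as, bs)"
        and r: "dsym_ranks k (D, as, bs) = map int (ms[J := ms ! J + 2])"
        and ss: "\<forall>i<J. strict_shifted (as ! i) (bs ! i)"
        unfolding T_def SS_def by (cases \<eta>) auto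
      have r2: "dsym_ranks k (D, as, bs) ! J \<ge> 2" using r L Jk by simp
      obtain D' as' bs' where e2: "Psi J (D, as, bs) = (D', as', bs')" by (cases "Psi J (D, as, bs)")
      have K': "is_kmds k n (D', as', bs')" using Psi_props(1)[OF K J r2] e2 by simp
      have r': "dsym_ranks k (D', as', bs') = map int ms"
      proof -
        have "dsym_ranks k (D', as', bs') = (map int (ms[J := ms ! J + 2]))[J := int (ms ! J)]"
          using Psi_props(2)[OF K J r2] e2 r L Jk by simp
        also have "\<dots> = map int ms"
        proof -
          have "(map int ms) ! J = int (ms ! J)" using L Jk by simp
          then show ?thesis using list_update_id[of "map int ms" J] by (simp add: map_update)
        qed
        finally show ?thesis .
      qed
      have ss': "\<forall>i<J. strict_shifted (as' ! i) (bs' ! i)"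
      proof (intro allI impI)
        fix i assume i: "i < J"
        then have "as' ! i = as ! i \<and> bs' ! i = bs ! i" using Psi_props(4)[OF K J r2, of i] e2 by simp
        then show "strict_shifted (as' ! i) (bs' ! i)" using ss i by simp
      qed
      have ns': "\<not> strict_shifted (as' ! J) (bs' ! J)" using Psi_props(5)[OF K J r2] e2 by simp
      show "\<eta>' \<in> X" unfolding X_def SS_def e' e e2 using K' r' ss' ns' by simp
    qed
  qed
  have "card X = card T" by (rule bij_betw_same_card[OF bij])
  then show ?thesis using c1 T_def by simp
qed


lemma iter:
  assumes J: "J + 1 < k" and L: "length ms = k"
  shows "card (SS k n ms J) = (\<Sum>t<N. card (SS k n (ms[J := ms ! J + 2 * t]) (Suc J)))
           + card (SS k n (ms[J := ms ! J + 2 * N]) J)"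
proof (induction N)
  case 0
  then show ?case by simp
next
  case (Suc N)
  define ms' where "ms' = ms[J := ms ! J + 2 * N]"
  have L': "length ms' = k" and n': "ms' ! J = ms ! J + 2 * N" using L J unfolding ms'_def by auto
  have e: "ms'[J := ms' ! J + 2] = ms[J := ms ! J + 2 * Suc N]" using L J unfolding ms'_def by simp
  have "card (SS k n ms' J) = card (SS k n ms' (Suc J)) + card (SS k n (ms'[J := ms' ! J + 2]) J)"
    by (rule key[OF J L'])
  moreover have "ms[J := ms ! J + 2 * N] ! J = ms ! J + 2 * N" using L J by simp
  ultimately show ?case using Suc.IH e unfolding ms'_def by simp
qed

lemma iter2:
  assumes J: "J + 1 < k" and L: "length ms = k"
  shows "card (SS k n ms J) = (\<Sum>t<Suc n. card (SS k n (ms[J := ms ! J + 2 * t]) (Suc J)))"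
proof -
  have "SS k n (ms[J := ms ! J + 2 * Suc n]) J = {}"
    by (rule SS_empty[of _ k J]) (use J L in auto)
  then show ?thesis using iter[OF J L, of n "Suc n"] by simp
qed

definition sh :: "nat \<Rightarrow> nat \<Rightarrow> nat list \<Rightarrow> nat list \<Rightarrow> nat list" where
  "sh k J t ms = map (\<lambda>i. if J \<le> i \<and> i < k - 1 then ms ! i + 2 * t ! (i - J) else ms ! i) [0..<k]"

definition LL :: "nat \<Rightarrow> nat \<Rightarrow> nat list set" where
  "LL N m = {t. set t \<subseteq> {..<N} \<and> length t = m}"

lemma finite_LL: "finite (LL N m)"
  unfolding LL_def by (rule finite_lists_length_eq) simp

lemma sum_LL_Suc: "sum f (LL N (Suc m)) = (\<Sum>x<N. \<Sum>t\<in>LL N m. f (x # t))"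
proof -
  have im: "LL N (Suc m) = (\<lambda>p. fst p # snd p) ` ({..<N} \<times> LL N m)"
  proof
    show "LL N (Suc m) \<subseteq> (\<lambda>p. fst p # snd p) ` ({..<N} \<times> LL N m)"
    proof
      fix t assume "t \<in> LL N (Suc m)"
      then obtain x t' where "t = x # t'" "x < N" "t' \<in> LL N m"
        unfolding LL_def by (cases t) auto
      then show "t \<in> (\<lambda>p. fst p # snd p) ` ({..<N} \<times> LL N m)" by force
    qed
    show "(\<lambda>p. fst p # snd p) ` ({..<N} \<times> LL N m) \<subseteq> LL N (Suc m)"
      unfolding LL_def by auto
  qed
  have inj: "inj_on (\<lambda>p. fst p # snd p) ({..<N} \<times> LL N m)"
    by (intro inj_onI) (auto simp: prod_eq_iff)
  have "sum f (LL N (Suc m)) = (\<Sum>p\<in>{..<N} \<times> LL N m. f (fst p # snd p))"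
    unfolding im by (subst sum.reindex[OF inj]) simp
  also have "\<dots> = (\<Sum>x<N. \<Sum>t\<in>LL N m. f (x # t))"
    by (subst sum.cartesian_product) (simp add: case_prod_beta)
  finally show ?thesis .
qed

lemma sh_step:
  assumes "J + 1 < k" "length ms = k"
  shows "sh k (Suc J) t' (ms[J := ms ! J + 2 * x]) = sh k J (x # t') ms"
  unfolding sh_def
proof (rule map_cong[OF refl])
  fix i assume "i \<in> set [0..<k]"
  then have i: "i < k" by simp
  show "(if Suc J \<le> i \<and> i < k - 1 then ms[J := ms ! J + 2 * x] ! i + 2 * t' ! (i - Suc J)
          else ms[J := ms ! J + 2 * x] ! i) =
        (if J \<le> i \<and> i < k - 1 then ms ! i + 2 * (x # t') ! (i - J) else ms ! i)"
  proof (cases "i = J")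
    case True
    then show ?thesis using assms by simp
  next
    case False
    then show ?thesis using assms i
      by (cases "Suc J \<le> i") (auto simp: Suc_diff_Suc[symmetric] Suc_diff_le)
  qed
qed

lemma multi:
  assumes k: "k \<ge> 1"
  shows "\<forall>J ms. J + m = k - 1 \<longrightarrow> length ms = k \<longrightarrow>
    card (SS k n ms J) = (\<Sum>t\<in>LL (Suc n) m. card (SS k n (sh k J t ms) (k - 1)))"
proof (induction m)
  case 0
  show ?case
  proof (intro allI impI)
    fix J and ms :: "nat list" assume J: "J + 0 = k - 1" and L: "length ms = k"
    have "LL (Suc n) 0 = {[]}" unfolding LL_def by auto
    moreover have "sh k J [] ms = ms"
    proof -
      have "sh k J [] ms = map (\<lambda>i. ms ! i) [0..<length ms]" unfolding sh_def using J L
        by (intro map_cong) auto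
      then show ?thesis by (simp add: map_nth)
    qed
    ultimately show "card (SS k n ms J) = (\<Sum>t\<in>LL (Suc n) 0. card (SS k n (sh k J t ms) (k - 1)))"
      using J by simp
  qed
next
  case (Suc m)
  show ?case
  proof (intro allI impI)
    fix J and ms :: "nat list" assume J: "J + Suc m = k - 1" and L: "length ms = k"
    have J1: "J + 1 < k" using J k by simp
    have "card (SS k n ms J) = (\<Sum>x<Suc n. card (SS k n (ms[J := ms ! J + 2 * x]) (Suc J)))"
      by (rule iter2[OF J1 L])
    also have "\<dots> = (\<Sum>x<Suc n. \<Sum>t\<in>LL (Suc n) m. card (SS k n (sh k J (x # t) ms) (k - 1)))"
    proof (rule sum.cong[OF refl])
      fix x
      have "card (SS k n (ms[J := ms ! J + 2 * x]) (Suc J)) =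
          (\<Sum>t\<in>LL (Suc n) m. card (SS k n (sh k (Suc J) t (ms[J := ms ! J + 2 * x])) (k - 1)))"
        using Suc.IH J L by simp
      then show "card (SS k n (ms[J := ms ! J + 2 * x]) (Suc J)) =
          (\<Sum>t\<in>LL (Suc n) m. card (SS k n (sh k J (x # t) ms) (k - 1)))"
        using sh_step[OF J1 L] by simp
    qed
    also have "\<dots> = (\<Sum>t\<in>LL (Suc n) (Suc m). card (SS k n (sh k J t ms) (k - 1)))"
      by (rule sum_LL_Suc[symmetric])
    finally show "card (SS k n ms J) = (\<Sum>t\<in>LL (Suc n) (Suc m). card (SS k n (sh k J t ms) (k - 1)))" .
  qed
qed

theorem mainTheorem8:
  fixes k n :: nat and ms :: "nat list"
  assumes "k \<ge> 2" and "length ms = k"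
  shows "real (Dk k (map int ms) n) =
    (\<Sum>\<^sub>\<infinity> t \<in> {t :: nat list. length t = k - 1}.
       real (Dss k [if i < k - 1 then int (ms ! i + 2 * t ! i) else int (ms ! i). i \<leftarrow> [0..<k]] n))"
proof -
  have Dk_eq: "Dk k (map int ms) n = card (SS k n ms 0)"
    unfolding Dk_def SS_def by (rule arg_cong[where f=card]) (auto split: prod.splits)
  have Dss_eq: "\<And>ms'. Dss k (map int ms') n = card (SS k n ms' (k - 1))"
    unfolding Dss_def SS_def is_ss_kmds_def
    by (rule arg_cong[where f=card]) (auto split: prod.splits simp: less_diff_conv)
  have lst: "\<And>t. [if i < k - 1 then int (ms ! i + 2 * t ! i) else int (ms ! i). i \<leftarrow> [0..<k]]
      = map int (sh k 0 t ms)"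
    unfolding sh_def by simp
  define f where "f t = real (Dss k [if i < k - 1 then int (ms ! i + 2 * t ! i) else int (ms ! i). i \<leftarrow> [0..<k]] n)" for t
  have f_eq: "f t = real (card (SS k n (sh k 0 t ms) (k - 1)))" for t
    unfolding f_def lst Dss_eq ..
  have sub: "LL (Suc n) (k - 1) \<subseteq> {t. length t = k - 1}" unfolding LL_def by auto
  have "(\<Sum>\<^sub>\<infinity> t \<in> {t :: nat list. length t = k - 1}. f t) = (\<Sum>\<^sub>\<infinity> t \<in> LL (Suc n) (k - 1). f t)"
  proof (rule infsum_cong_neutral)
    fix t assume t: "t \<in> {t. length t = k - 1} - LL (Suc n) (k - 1)"
    then have lt: "length t = k - 1" and "\<not> set t \<subseteq> {..<Suc n}" unfolding LL_def by auto
    then obtain x where "x \<in> set t" "x \<ge> Suc n" by (meson lessThan_iff not_less subsetI)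
    then obtain i where i0: "i < length t" "t ! i = x" by (auto simp: in_set_conv_nth)
    then have i: "i < k - 1" "t ! i \<ge> Suc n" using lt \<open>x \<ge> Suc n\<close> by auto
    have "SS k n (sh k 0 t ms) (k - 1) = {}"
    proof (rule SS_empty[of _ k i])
      show "length (sh k 0 t ms) = k" unfolding sh_def by simp
      show "i < k" using i by simp
      have "sh k 0 t ms ! i = ms ! i + 2 * t ! i" unfolding sh_def using i by simp
      then show "n < sh k 0 t ms ! i" using i by simp
    qed
    then show "f t = 0" unfolding f_eq by simp
  qed (use sub in auto)
  also have "\<dots> = (\<Sum>t\<in>LL (Suc n) (k - 1). f t)" by (rule infsum_finite[OF finite_LL])
  also have "\<dots> = real (\<Sum>t\<in>LL (Suc n) (k - 1). card (SS k n (sh k 0 t ms) (k - 1)))"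
    unfolding f_eq by simp
  also have "\<dots> = real (card (SS k n ms 0))"
    using multi[of k "k - 1" n] assms by simp
  finally show ?thesis unfolding f_def Dk_eq by simp
qed

end
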